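(* Let $(V,\mathcal{E})$ be a forward or backward neutral genealogy model. For $n<m$ let $p_{n,m}$ be the probability that two distinct vertices of $V_m$, chosen uniformly at random (independently of $\mathcal{E}$), have a common ancestor in $V_n$. Then $$p_{n,m}=1-\prod_{j=n}^{m-1}(1-s_j).$$ In particular $m\mapsto p_{n,m}$ is non-decreasing, and if $s_j<1$ for all $j$ then $p_{n,\infty}:=\lim_{m\to\infty}p_{n,m}=1$ for every $n$ if and only if $\sum_js_j=\infty$.
   Context: Data: $\tau\in\mathbb{N}\cup\{\infty\}$, positive integers $(X_n)_{n<\tau}$, vectors $k_n=(k_n(i))_{i=1}^{X_n}$ of nonnegative integers with $\sum_ik_n(i)=X_{n+1}\ge 2$. $V_n=\{(n,i):1\le i\le X_n\}$. A genealogy model is a random edge set $\mathcal{E}\subset\bigcup_nV_n\times V_{n+1}$ such that each vertex of $V_{n+1}$ has exactly one parent in $V_n$ and the out-degrees in $V_n$ are a permutation of $k_n$. $\mathcal{E}_n=\mathcal{E}\cap(V_n\times V_{n+1})$, $K_n=(\mathrm{od}((n,i)))_i$, $\Xi_n$ = partition of $V_{n+1}$ into sibling sets. Forward neutral: for all $n$, $K_n$ exchangeable and independent of $(\mathcal{E}_m)_{m<n}$. Backward neutral: for all $n$, $\Xi_n$ exchangeable and independent of $(\mathcal{E}_m)_{m>n}$. Coalescent time scale increments: $s_n=\sum_i\frac{k_n(i)(k_n(i)-1)}{X_{n+1}(X_{n+1}-1)}$. *)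

theory Defs
  imports "HOL-Probability.Probability" "HOL-Combinatorics.Permutations"
begin

(* Encoding: generations n with enat n < tau; vertex (n,i), 1 <= i <= X n.
   The random edge set is encoded by the random parent maps
   E n w :: nat => nat,  E n w j = index of the parent in V_n of vertex (n+1, j)
   (defined as 0 outside {1..X (n+1)}).  E_n of the paper is the graph of E n w. *)

definition genealogy_data :: "enat \<Rightarrow> (nat \<Rightarrow> nat) \<Rightarrow> (nat \<Rightarrow> nat \<Rightarrow> nat) \<Rightarrow> bool" where
  "genealogy_data \<tau> X k \<longleftrightarrow>
     (\<forall>n. enat n < \<tau> \<longrightarrow> X n \<ge> 1) \<and>
     (\<forall>n. enat (Suc n) < \<tau> \<longrightarrow> (\<Sum>i=1..X n. k n i) = X (Suc n) \<and> X (Suc n) \<ge> 2)"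

definition outdeg :: "(nat \<Rightarrow> 'a \<Rightarrow> nat \<Rightarrow> nat) \<Rightarrow> 'a \<Rightarrow> (nat \<Rightarrow> nat) \<Rightarrow> nat \<Rightarrow> nat \<Rightarrow> nat" where
  "outdeg E w X n = (\<lambda>i. if i \<in> {1..X n} then card {j \<in> {1..X (Suc n)}. E n w j = i} else 0)"

definition sibpart :: "(nat \<Rightarrow> 'a \<Rightarrow> nat \<Rightarrow> nat) \<Rightarrow> 'a \<Rightarrow> (nat \<Rightarrow> nat) \<Rightarrow> nat \<Rightarrow> nat set set" where
  "sibpart E w X n = {{j \<in> {1..X (Suc n)}. E n w j = i} | i. i \<in> {1..X n}} - {{}}"

(* independence of two random variables with possibly different value types
   (the library's indep_var requires equal types); this is indep_var unfolded *)
definition indep_rv :: "'a measure \<Rightarrow> 'b measure \<Rightarrow> ('a \<Rightarrow> 'b) \<Rightarrow> 'c measure \<Rightarrow> ('a \<Rightarrow> 'c) \<Rightarrow> bool" where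
  "indep_rv M Ma A Mb B \<longleftrightarrow>
     A \<in> measurable M Ma \<and> B \<in> measurable M Mb \<and>
     prob_space.indep_set M {A -` S \<inter> space M | S. S \<in> sets Ma} {B -` S \<inter> space M | S. S \<in> sets Mb}"

definition genealogy_model ::
  "'a measure \<Rightarrow> enat \<Rightarrow> (nat \<Rightarrow> nat) \<Rightarrow> (nat \<Rightarrow> nat \<Rightarrow> nat) \<Rightarrow> (nat \<Rightarrow> 'a \<Rightarrow> nat \<Rightarrow> nat) \<Rightarrow> bool" where
  "genealogy_model M \<tau> X k E \<longleftrightarrow> prob_space M \<and>
     (\<forall>n. enat (Suc n) < \<tau> \<longrightarrow>
        E n \<in> measurable M (count_space UNIV) \<and>
        (\<forall>w \<in> space M.
           (\<forall>j \<in> {1..X (Suc n)}. E n w j \<in> {1..X n}) \<and>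
           (\<forall>j. j \<notin> {1..X (Suc n)} \<longrightarrow> E n w j = 0) \<and>
           (\<exists>\<sigma>. \<sigma> permutes {1..X n} \<and> (\<forall>i \<in> {1..X n}. outdeg E w X n i = k n (\<sigma> i)))))"

definition forward_neutral ::
  "'a measure \<Rightarrow> enat \<Rightarrow> (nat \<Rightarrow> nat) \<Rightarrow> (nat \<Rightarrow> 'a \<Rightarrow> nat \<Rightarrow> nat) \<Rightarrow> bool" where
  "forward_neutral M \<tau> X E \<longleftrightarrow>
     (\<forall>n. enat (Suc n) < \<tau> \<longrightarrow>
        (\<forall>\<sigma>. \<sigma> permutes {1..X n} \<longrightarrow>
           distr M (count_space UNIV) (\<lambda>w. outdeg E w X n \<circ> \<sigma>)
             = distr M (count_space UNIV) (\<lambda>w. outdeg E w X n)) \<and>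
        indep_rv M (count_space UNIV) (\<lambda>w. outdeg E w X n)
           (PiM {..<n} (\<lambda>_. count_space (UNIV :: (nat \<Rightarrow> nat) set))) (\<lambda>w. \<lambda>m\<in>{..<n}. E m w))"

definition backward_neutral ::
  "'a measure \<Rightarrow> enat \<Rightarrow> (nat \<Rightarrow> nat) \<Rightarrow> (nat \<Rightarrow> 'a \<Rightarrow> nat \<Rightarrow> nat) \<Rightarrow> bool" where
  "backward_neutral M \<tau> X E \<longleftrightarrow>
     (\<forall>n. enat (Suc n) < \<tau> \<longrightarrow>
        (\<forall>\<sigma>. \<sigma> permutes {1..X (Suc n)} \<longrightarrow>
           distr M (count_space UNIV) (\<lambda>w. (\<lambda>B. \<sigma> ` B) ` sibpart E w X n)
             = distr M (count_space UNIV) (\<lambda>w. sibpart E w X n)) \<and>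
        indep_rv M (count_space UNIV) (\<lambda>w. sibpart E w X n)
           (PiM {m. n < m \<and> enat (Suc m) < \<tau>} (\<lambda>_. count_space (UNIV :: (nat \<Rightarrow> nat) set)))
           (\<lambda>w. \<lambda>m\<in>{m. n < m \<and> enat (Suc m) < \<tau>}. E m w))"

definition coal_incr :: "(nat \<Rightarrow> nat \<Rightarrow> nat) \<Rightarrow> (nat \<Rightarrow> nat) \<Rightarrow> nat \<Rightarrow> real" where
  "coal_incr k X n = (\<Sum>i=1..X n. real (k n i) * (real (k n i) - 1))
                      / (real (X (Suc n)) * (real (X (Suc n)) - 1))"

(* anc E w n d j = index of the ancestor in V_n of vertex (n+d, j) *)
fun anc :: "(nat \<Rightarrow> 'a \<Rightarrow> nat \<Rightarrow> nat) \<Rightarrow> 'a \<Rightarrow> nat \<Rightarrow> nat \<Rightarrow> nat \<Rightarrow> nat" where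
  "anc E w n 0 j = j"
| "anc E w n (Suc d) j = E n w (anc E w (Suc n) d j)"

(* p_{n,m}: two distinct vertices of V_m chosen uniformly (independently of the genealogy)
   have a common ancestor in V_n; averaged over the uniform ordered pair *)
definition coal_prob :: "'a measure \<Rightarrow> (nat \<Rightarrow> nat) \<Rightarrow> (nat \<Rightarrow> 'a \<Rightarrow> nat \<Rightarrow> nat) \<Rightarrow> nat \<Rightarrow> nat \<Rightarrow> real" where
  "coal_prob M X E n m =
     (\<Sum>i\<in>{1..X m}. \<Sum>j\<in>{1..X m} - {i}.
         measure M {w \<in> space M. anc E w n (m - n) i = anc E w n (m - n) j})
     / (real (X m) * (real (X m) - 1))"

end

theory Submission
  imports Defs
begin

lemma anc_meas:
  assumes "\<And>j. n \<le> j \<Longrightarrow> j < n + d \<Longrightarrow> E j \<in> measurable N (count_space UNIV)"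
  shows "(\<lambda>w. anc E w n d i) \<in> measurable N (count_space UNIV)"
  using assms
proof (induction d arbitrary: n)
  case 0 then show ?case by simp
next
  case (Suc d)
  have g: "(\<lambda>w. anc E w (Suc n) d i) \<in> measurable N (count_space UNIV)"
    using Suc.prems by (intro Suc.IH) auto
  have f: "(\<lambda>w. E n w x) \<in> measurable N (count_space UNIV)" for x
  proof -
    have "E n \<in> measurable N (count_space UNIV)" using Suc.prems by auto
    moreover have "(\<lambda>F::nat\<Rightarrow>nat. F x) \<in> measurable (count_space UNIV) (count_space UNIV)" by simp
    ultimately show ?thesis by (rule measurable_compose_rev[rotated])
  qed
  show ?case using measurable_compose_countable[where f="\<lambda>x w. E n w x", OF f g] by simp
qed

lemma eq_set_meas:
  fixes f g :: "'a \<Rightarrow> nat"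
  assumes "f \<in> measurable N (count_space UNIV)" "g \<in> measurable N (count_space UNIV)"
  shows "{w \<in> space N. f w = g w} \<in> sets N"
proof -
  have "{w \<in> space N. f w = g w} = (\<Union>v. (f -` {v} \<inter> space N) \<inter> (g -` {v} \<inter> space N))" by auto
  also have "\<dots> \<in> sets N" using assms by (intro sets.countable_UN) (auto intro: measurable_sets)
  finally show ?thesis .
qed

lemma anc_shift: "anc E w n (Suc d) j = anc E w n d (E (n + d) w j)"
  by (induction d arbitrary: n) auto


lemma sum_fiber:
  fixes g :: "nat \<Rightarrow> real"
  assumes "finite S" "finite T" "\<forall>x\<in>S. e x \<in> T"
  shows "(\<Sum>x\<in>S. g (e x)) = (\<Sum>y\<in>T. real (card {x\<in>S. e x = y}) * g y)"
proof -
  have "(\<Sum>x\<in>S. g (e x)) = (\<Sum>y\<in>T. \<Sum>x\<in>{x\<in>S. e x = y}. g (e x))"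
  proof -
    have "e ` S \<subseteq> T" using assms(3) by auto
    from sum.group[OF assms(1,2) this, of "\<lambda>x. g (e x)"] show ?thesis by simp
  qed
  also have "\<dots> = (\<Sum>y\<in>T. real (card {x\<in>S. e x = y}) * g y)"
    by (intro sum.cong refl) simp
  finally show ?thesis .
qed

lemma sum_pairs_fiber:
  fixes F :: "nat \<Rightarrow> nat \<Rightarrow> real"
  assumes "finite S" "finite T" "\<forall>x\<in>S. e x \<in> T"
  shows "(\<Sum>i\<in>S. \<Sum>j\<in>S-{i}. F (e i) (e j))
    = (\<Sum>a\<in>T. \<Sum>b\<in>T. real (card {x\<in>S. e x = a}) * real (card {x\<in>S. e x = b}) * F a b)
      - (\<Sum>a\<in>T. real (card {x\<in>S. e x = a}) * F a a)"
proof -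
  have "(\<Sum>i\<in>S. \<Sum>j\<in>S-{i}. F (e i) (e j)) = (\<Sum>i\<in>S. (\<Sum>j\<in>S. F (e i) (e j)) - F (e i) (e i))"
    using assms(1) by (intro sum.cong refl) (simp add: sum_diff1)
  also have "\<dots> = (\<Sum>i\<in>S. \<Sum>j\<in>S. F (e i) (e j)) - (\<Sum>i\<in>S. F (e i) (e i))"
    by (simp add: sum_subtractf)
  also have "(\<Sum>i\<in>S. \<Sum>j\<in>S. F (e i) (e j)) = (\<Sum>i\<in>S. \<Sum>b\<in>T. real (card {x\<in>S. e x = b}) * F (e i) b)"
    by (intro sum.cong refl sum_fiber[OF assms])
  also have "\<dots> = (\<Sum>a\<in>T. real (card {x\<in>S. e x = a}) * (\<Sum>b\<in>T. real (card {x\<in>S. e x = b}) * F a b))"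
    by (rule sum_fiber[OF assms, of "\<lambda>a. \<Sum>b\<in>T. real (card {x\<in>S. e x = b}) * F a b"])
  also have "\<dots> = (\<Sum>a\<in>T. \<Sum>b\<in>T. real (card {x\<in>S. e x = a}) * real (card {x\<in>S. e x = b}) * F a b)"
    by (simp add: sum_distrib_left mult.assoc)
  also have "(\<Sum>i\<in>S. F (e i) (e i)) = (\<Sum>a\<in>T. real (card {x\<in>S. e x = a}) * F a a)"
    by (rule sum_fiber[OF assms, of "\<lambda>a. F a a"])
  finally show ?thesis .
qed

lemma sum_offdiag_const:
  fixes f :: "nat \<Rightarrow> nat \<Rightarrow> real"
  assumes "finite S" "\<And>a b. a \<in> S \<Longrightarrow> b \<in> S \<Longrightarrow> a \<noteq> b \<Longrightarrow> f a b = c"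
  shows "(\<Sum>a\<in>S. \<Sum>b\<in>S-{a}. f a b) = c * real (card S) * (real (card S) - 1)"
proof -
  have "(\<Sum>a\<in>S. \<Sum>b\<in>S-{a}. f a b) = (\<Sum>a\<in>S. c * (real (card S) - 1))"
  proof (intro sum.cong refl)
    fix a assume a: "a \<in> S"
    have "(\<Sum>b\<in>S-{a}. f a b) = (\<Sum>b\<in>S-{a}. c)" using assms a by (intro sum.cong) auto
    also have "\<dots> = c * (real (card S) - 1)"
    proof -
      have "card S \<ge> 1" using a assms(1) by (metis One_nat_def Suc_leI card_gt_0_iff empty_iff)
      then show ?thesis using a assms(1) by (simp add: card_Diff_singleton of_nat_diff mult.commute)
    qed
    finally show "(\<Sum>b\<in>S-{a}. f a b) = c * (real (card S) - 1)" .
  qed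
  also have "\<dots> = c * real (card S) * (real (card S) - 1)" by simp
  finally show ?thesis .
qed

lemma two_point_perm:
  assumes "a \<in> S" "b \<in> S" "a' \<in> S" "b' \<in> S" "a \<noteq> b" "a' \<noteq> b'"
  shows "\<exists>\<sigma>. \<sigma> permutes S \<and> \<sigma> a = a' \<and> \<sigma> b = b'"
proof -
  define s1 where "s1 = Transposition.transpose a a'"
  define b1 where "b1 = s1 b"
  define s2 where "s2 = Transposition.transpose b1 b'"
  have p1: "s1 permutes S" unfolding s1_def using assms by (intro permutes_swap_id) auto
  have b1S: "b1 \<in> S" unfolding b1_def s1_def using assms by (auto simp: Transposition.transpose_def)
  have p2: "s2 permutes S" unfolding s2_def using assms b1S by (intro permutes_swap_id) auto
  have "b1 \<noteq> a'" unfolding b1_def s1_def using assms by (auto simp: Transposition.transpose_def)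
  then have "(s2 \<circ> s1) a = a'" unfolding s2_def s1_def using assms by (auto simp: Transposition.transpose_def)
  moreover have "(s2 \<circ> s1) b = b'" unfolding s2_def b1_def by (simp add: Transposition.transpose_def)
  ultimately show ?thesis using permutes_compose[OF p1 p2] by blast
qed


lemma real_nat_meas: "g \<in> measurable M (count_space UNIV) \<Longrightarrow> (\<lambda>w. real (g w)) \<in> borel_measurable M"
  by (rule measurable_compose[of g M "count_space UNIV"]) auto

lemma indep_fin_int:
  fixes f :: "'b \<Rightarrow> real"
  assumes P: "prob_space M" and ind: "indep_rv M (count_space UNIV) K N Y" and T: "T \<in> sets N"
    and R: "finite R" "\<forall>w\<in>space M. f (K w) \<in> R"
  shows "(\<integral>w. f (K w) * indicator (Y -` T \<inter> space M) w \<partial>M)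
       = (\<integral>w. f (K w) \<partial>M) * measure M (Y -` T \<inter> space M)"
proof -
  interpret prob_space M by (rule P)
  have Km: "K \<in> measurable M (count_space UNIV)" and Ym: "Y \<in> measurable M N"
    and indK: "indep_set {K -` S \<inter> space M | S. S \<in> sets (count_space UNIV)} {Y -` S \<inter> space M | S. S \<in> sets N}"
    using ind unfolding indep_rv_def by auto
  define C where "C = Y -` T \<inter> space M"
  define A where "A v = K -` {x. f x = v} \<inter> space M" for v
  have Cs: "C \<in> events" unfolding C_def using Ym T by (rule measurable_sets)
  have As: "A v \<in> events" for v unfolding A_def using Km by (rule measurable_sets) simp
  have pAC: "prob (A v \<inter> C) = prob (A v) * prob C" for v
  proof (rule indep_setD[OF indK])
    show "A v \<in> {K -` S \<inter> space M | S. S \<in> sets (count_space UNIV)}"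
      unfolding A_def by (rule CollectI, rule exI[of _ "{x. f x = v}"]) simp
    show "C \<in> {Y -` S \<inter> space M | S. S \<in> sets N}" unfolding C_def
      by (rule CollectI, rule exI[of _ T]) (simp add: T)
  qed
  have rep: "f (K w) = (\<Sum>v\<in>R. v * indicator (A v) w)" if w: "w \<in> space M" for w
  proof -
    have "(\<Sum>v\<in>R. v * indicator (A v) w) = (\<Sum>v\<in>R. if v = f (K w) then v else 0)"
      using w unfolding A_def by (intro sum.cong refl) (auto simp: indicator_def)
    also have "\<dots> = f (K w)" using R w by (simp add: sum.delta')
    finally show ?thesis by simp
  qed
  have intI: "integrable M (indicator S :: _ \<Rightarrow> real)" if "S \<in> events" for S
    using that by (intro integrable_real_indicator) (auto simp: less_top[symmetric])
  have "(\<integral>w. f (K w) * indicator C w \<partial>M) = (\<integral>w. (\<Sum>v\<in>R. v * indicator (A v \<inter> C) w) \<partial>M)"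
    by (rule Bochner_Integration.integral_cong[OF refl]) (simp add: rep sum_distrib_right indicator_inter_arith mult.assoc)
  also have "\<dots> = (\<Sum>v\<in>R. v * prob (A v \<inter> C))"
    using As Cs by (simp add: intI sets.Int Int_absorb2 sets.sets_into_space)
  also have "\<dots> = (\<Sum>v\<in>R. v * prob (A v)) * prob C"
    by (simp add: pAC sum_distrib_right mult.assoc)
  also have "(\<Sum>v\<in>R. v * prob (A v)) = (\<integral>w. (\<Sum>v\<in>R. v * indicator (A v) w) \<partial>M)"
    using As by (simp add: intI Int_absorb2 sets.sets_into_space)
  also have "\<dots> = (\<integral>w. f (K w) \<partial>M)"
    by (rule Bochner_Integration.integral_cong[OF refl]) (simp add: rep)
  finally show ?thesis unfolding C_def .
qed


lemma prod_ge_one_minus_sum: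
  fixes s :: "nat \<Rightarrow> real"
  assumes "finite I" "\<And>j. j \<in> I \<Longrightarrow> 0 \<le> s j \<and> s j \<le> 1"
  shows "1 - (\<Sum>j\<in>I. s j) \<le> (\<Prod>j\<in>I. 1 - s j)"
  using assms
proof (induction I rule: finite_induct)
  case empty then show ?case by simp
next
  case (insert x F)
  have IH: "1 - (\<Sum>j\<in>F. s j) \<le> (\<Prod>j\<in>F. 1 - s j)" using insert by auto
  have p01: "0 \<le> (\<Prod>j\<in>F. 1 - s j)" "(\<Prod>j\<in>F. 1 - s j) \<le> 1"
    using insert.prems by (auto intro!: prod_nonneg prod_le_1)
  have sx: "0 \<le> s x" "s x \<le> 1" using insert.prems by auto
  have "1 - (\<Sum>j\<in>insert x F. s j) = (1 - (\<Sum>j\<in>F. s j)) - s x" using insert by simp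
  also have "\<dots> \<le> (\<Prod>j\<in>F. 1 - s j) - s x * (\<Prod>j\<in>F. 1 - s j)"
    using IH sx p01 by (smt (verit) mult_left_le)
  also have "\<dots> = (\<Prod>j\<in>insert x F. 1 - s j)" using insert by (simp add: algebra_simps)
  finally show ?case .
qed

lemma prod_tendsto_zero_iff:
  fixes s :: "nat \<Rightarrow> real"
  assumes s01: "\<And>j. 0 \<le> s j \<and> s j \<le> 1"
  shows "(\<forall>n. (\<lambda>m. \<Prod>j\<in>{n..<m}. 1 - s j) \<longlonglongrightarrow> 0) \<longleftrightarrow> \<not> summable s"
proof
  assume L: "\<forall>n. (\<lambda>m. \<Prod>j\<in>{n..<m}. 1 - s j) \<longlonglongrightarrow> 0"
  show "\<not> summable s"
  proof
    assume sm: "summable s"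
    obtain N where "\<forall>n\<ge>N. norm (\<Sum>j. s (j + n)) < 1/2"
      using suminf_exist_split[OF _ sm, of "1/2"] by auto
    then obtain n where n: "\<bar>\<Sum>j. s (j + n)\<bar> < 1/2" by auto
    have smn: "summable (\<lambda>j. s (j + n))" using sm by (simp add: summable_iff_shift)
    have bound: "(\<Prod>j\<in>{n..<m}. 1 - s j) \<ge> 1/2" for m
    proof -
      have "(\<Sum>j\<in>{n..<m}. s j) = (\<Sum>j<m-n. s (j + n))"
      proof (cases "n \<le> m")
        case True
        have "(\<Sum>j\<in>{0+n..<(m-n)+n}. s j) = (\<Sum>j\<in>{0..<m-n}. s (j + n))"
          by (rule sum.shift_bounds_nat_ivl)
        then show ?thesis using True by (simp add: atLeast0LessThan)
      next
        case False then show ?thesis by simp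
      qed
      also have "\<dots> \<le> (\<Sum>j. s (j + n))"
        using smn s01 by (intro sum_le_suminf) auto
      finally have "(\<Sum>j\<in>{n..<m}. s j) < 1/2" using n by linarith
      then show ?thesis using prod_ge_one_minus_sum[of "{n..<m}" s] s01 by simp
    qed
    from L have "(\<lambda>m. \<Prod>j\<in>{n..<m}. 1 - s j) \<longlonglongrightarrow> 0" by blast
    then have "0 \<ge> (1/2::real)" using bound by (intro LIMSEQ_le_const) auto
    then show False by simp
  qed
next
  assume ns: "\<not> summable s"
  show "\<forall>n. (\<lambda>m. \<Prod>j\<in>{n..<m}. 1 - s j) \<longlonglongrightarrow> 0"
  proof
    fix n
    have unb: "\<exists>N. Z < (\<Sum>j<N. s j)" for Z
    proof (rule ccontr)
      assume "\<not> ?thesis"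
      then have "\<And>N. (\<Sum>j<N. s j) \<le> Z" by (simp add: not_less)
      then have "summable s" using s01 by (intro summableI_nonneg_bounded) auto
      with ns show False by simp
    qed
    have lim: "filterlim (\<lambda>m. \<Sum>j\<in>{n..<m}. s j) at_top sequentially"
    proof (subst filterlim_at_top, intro allI)
      fix Z
      obtain N where N: "Z + (\<Sum>j<n. s j) < (\<Sum>j<N. s j)" using unb by blast
      show "eventually (\<lambda>m. Z \<le> (\<Sum>j\<in>{n..<m}. s j)) sequentially"
        unfolding eventually_sequentially
      proof (intro exI[of _ "max N n"] allI impI)
        fix m assume m: "max N n \<le> m"
        have "(\<Sum>j<N. s j) \<le> (\<Sum>j<m. s j)" using m s01 by (intro sum_mono2) auto
        moreover have "(\<Sum>j<m. s j) = (\<Sum>j<n. s j) + (\<Sum>j\<in>{n..<m}. s j)"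
          using m by (metis max.bounded_iff sum.atLeastLessThan_concat lessThan_atLeast0 zero_le)
        ultimately show "Z \<le> (\<Sum>j\<in>{n..<m}. s j)" using N by linarith
      qed
    qed
    have e0: "(\<lambda>m. exp (- (\<Sum>j\<in>{n..<m}. s j))) \<longlonglongrightarrow> 0"
      using filterlim_compose[OF exp_at_bot filterlim_compose[OF filterlim_uminus_at_bot_at_top lim]]
      by (simp add: o_def)
    show "(\<lambda>m. \<Prod>j\<in>{n..<m}. 1 - s j) \<longlonglongrightarrow> 0"
    proof (rule tendsto_sandwich[OF _ _ tendsto_const e0])
      show "\<forall>\<^sub>F m in sequentially. 0 \<le> (\<Prod>j\<in>{n..<m}. 1 - s j)"
        using s01 by (intro always_eventually allI prod_nonneg) auto
      show "\<forall>\<^sub>F m in sequentially. (\<Prod>j\<in>{n..<m}. 1 - s j) \<le> exp (- (\<Sum>j\<in>{n..<m}. s j))"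
      proof (intro always_eventually allI)
        fix m
        have "(\<Prod>j\<in>{n..<m}. 1 - s j) \<le> (\<Prod>j\<in>{n..<m}. exp (- s j))"
          using s01 by (intro prod_mono) (auto simp: exp_minus_ge)
        also have "\<dots> = exp (- (\<Sum>j\<in>{n..<m}. s j))"
          by (simp add: exp_sum[symmetric] sum_negf)
        finally show "(\<Prod>j\<in>{n..<m}. 1 - s j) \<le> exp (- (\<Sum>j\<in>{n..<m}. s j))" .
      qed
    qed
  qed
qed


definition Dset :: "'a measure \<Rightarrow> (nat \<Rightarrow> 'a \<Rightarrow> nat \<Rightarrow> nat) \<Rightarrow> nat \<Rightarrow> nat \<Rightarrow> nat \<Rightarrow> nat \<Rightarrow> 'a set" where
  "Dset M E n m a b = {w \<in> space M. anc E w n (m - n) a \<noteq> anc E w n (m - n) b}"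

definition Rs :: "'a measure \<Rightarrow> (nat \<Rightarrow> nat) \<Rightarrow> (nat \<Rightarrow> 'a \<Rightarrow> nat \<Rightarrow> nat) \<Rightarrow> nat \<Rightarrow> nat \<Rightarrow> real" where
  "Rs M X E n m = (\<Sum>i\<in>{1..X m}. \<Sum>j\<in>{1..X m} - {i}. measure M (Dset M E n m i j))"

lemma enat_le_less: "j \<le> m \<Longrightarrow> enat m < \<tau> \<Longrightarrow> enat j < \<tau>"
  by (meson enat_ord_simps(1) order_le_less_trans)

context
  fixes M :: "'a measure" and \<tau> :: enat and X :: "nat \<Rightarrow> nat"
    and k :: "nat \<Rightarrow> nat \<Rightarrow> nat" and E :: "nat \<Rightarrow> 'a \<Rightarrow> nat \<Rightarrow> nat"
  assumes gd: "genealogy_data \<tau> X k"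
    and gm: "genealogy_model M \<tau> X k E"
begin

lemma PS: "prob_space M" using gm unfolding genealogy_model_def by auto

interpretation prob_space M by (rule PS)

lemma Emeas: "enat (Suc n) < \<tau> \<Longrightarrow> E n \<in> measurable M (count_space UNIV)"
  using gm unfolding genealogy_model_def by auto

lemma Erange: "enat (Suc n) < \<tau> \<Longrightarrow> w \<in> space M \<Longrightarrow> j \<in> {1..X (Suc n)} \<Longrightarrow> E n w j \<in> {1..X n}"
  using gm unfolding genealogy_model_def by blast

lemma Eperm: "enat (Suc n) < \<tau> \<Longrightarrow> w \<in> space M \<Longrightarrow>
   \<exists>\<sigma>. \<sigma> permutes {1..X n} \<and> (\<forall>i \<in> {1..X n}. outdeg E w X n i = k n (\<sigma> i))"
  using gm unfolding genealogy_model_def by blast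

lemma Xpos: "enat n < \<tau> \<Longrightarrow> X n \<ge> 1"
  using gd unfolding genealogy_data_def by auto

lemma X2: "enat (Suc n) < \<tau> \<Longrightarrow> X (Suc n) \<ge> 2"
  using gd unfolding genealogy_data_def by auto

lemma ksum: "enat (Suc n) < \<tau> \<Longrightarrow> (\<Sum>i=1..X n. k n i) = X (Suc n)"
  using gd unfolding genealogy_data_def by auto

lemma anc_range: "enat (n + d) < \<tau> \<Longrightarrow> w \<in> space M \<Longrightarrow> i \<in> {1..X (n + d)} \<Longrightarrow> anc E w n d i \<in> {1..X n}"
proof (induction d arbitrary: n)
  case 0 then show ?case by simp
next
  case (Suc d)
  have "anc E w (Suc n) d i \<in> {1..X (Suc n)}" using Suc by (intro Suc.IH) auto
  moreover have "enat (Suc n) < \<tau>" using Suc.prems(1) by (rule enat_le_less[rotated]) simp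
  ultimately show ?case using Suc.prems Erange[of n w "anc E w (Suc n) d i"] by simp
qed

lemma anc_measM: "enat (n + d) < \<tau> \<Longrightarrow> (\<lambda>w. anc E w n d i) \<in> measurable M (count_space UNIV)"
  by (rule anc_meas) (auto intro!: Emeas elim: enat_le_less[rotated])

lemma Dset_sets: "enat m < \<tau> \<Longrightarrow> n \<le> m \<Longrightarrow> Dset M E n m a b \<in> events"
proof -
  assume m: "enat m < \<tau>" "n \<le> m"
  then have "enat (n + (m - n)) < \<tau>" by simp
  then have "{w \<in> space M. anc E w n (m - n) a = anc E w n (m - n) b} \<in> events"
    by (intro eq_set_meas anc_measM)
  then have "space M - {w \<in> space M. anc E w n (m - n) a = anc E w n (m - n) b} \<in> events" by auto
  also have "space M - {w \<in> space M. anc E w n (m - n) a = anc E w n (m - n) b} = Dset M E n m a b"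
    unfolding Dset_def by auto
  finally show ?thesis .
qed

lemma coal_Rs:
  assumes "enat m < \<tau>" "n \<le> m"
  shows "coal_prob M X E n m = (real (X m) * (real (X m) - 1) - Rs M X E n m) / (real (X m) * (real (X m) - 1))"
proof -
  have "measure M {w \<in> space M. anc E w n (m - n) i = anc E w n (m - n) j} = 1 - measure M (Dset M E n m i j)" for i j
  proof -
    have "{w \<in> space M. anc E w n (m - n) i = anc E w n (m - n) j} = space M - Dset M E n m i j"
      unfolding Dset_def by auto
    then show ?thesis using Dset_sets[OF assms] by (simp add: prob_compl)
  qed
  then have "(\<Sum>i\<in>{1..X m}. \<Sum>j\<in>{1..X m} - {i}. measure M {w \<in> space M. anc E w n (m - n) i = anc E w n (m - n) j})
     = (\<Sum>i\<in>{1..X m}. \<Sum>j\<in>{1..X m} - {i}. 1 - measure M (Dset M E n m i j))" by simp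
  also have "\<dots> = (\<Sum>i\<in>{1..X m}. \<Sum>j\<in>{1..X m} - {i}. (1::real)) - Rs M X E n m"
    unfolding Rs_def by (simp add: sum_subtractf)
  also have "(\<Sum>i\<in>{1..X m}. \<Sum>j\<in>{1..X m} - {i}. (1::real)) = real (X m) * (real (X m) - 1)"
    by (subst sum_offdiag_const[where c=1]) auto
  finally show ?thesis unfolding coal_prob_def by simp
qed

lemma Rs_base: "enat n < \<tau> \<Longrightarrow> Rs M X E n n = real (X n) * (real (X n) - 1)"
proof -
  have "Dset M E n n i j = space M" if "i \<noteq> j" for i j using that unfolding Dset_def by auto
  then have "Rs M X E n n = (\<Sum>i\<in>{1..X n}. \<Sum>j\<in>{1..X n} - {i}. 1)"
    unfolding Rs_def by (intro sum.cong refl) (auto simp: prob_space)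
  also have "\<dots> = real (X n) * (real (X n) - 1)"
    by (subst sum_offdiag_const[where c=1]) auto
  finally show "Rs M X E n n = real (X n) * (real (X n) - 1)" .
qed

end

context
  fixes M :: "'a measure" and \<tau> :: enat and X :: "nat \<Rightarrow> nat"
    and k :: "nat \<Rightarrow> nat \<Rightarrow> nat" and E :: "nat \<Rightarrow> 'a \<Rightarrow> nat \<Rightarrow> nat"
  assumes gd: "genealogy_data \<tau> X k"
    and gm: "genealogy_model M \<tau> X k E"
begin

lemma outdeg_card: "a \<in> {1..X m} \<Longrightarrow> outdeg E w X m a = card {j\<in>{1..X (Suc m)}. E m w j = a}"
  unfolding outdeg_def by simp

lemma sumK: assumes "enat (Suc m) < \<tau>" "w \<in> space M"
  shows "(\<Sum>a\<in>{1..X m}. real (outdeg E w X m a)) = real (X (Suc m))"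
proof -
  have "real (X (Suc m)) = (\<Sum>x\<in>{1..X (Suc m)}. (\<lambda>_. 1::real) (E m w x))" by simp
  also have "\<dots> = (\<Sum>a\<in>{1..X m}. real (card {j\<in>{1..X (Suc m)}. E m w j = a}) * 1)"
    using Erange[OF gd gm assms] by (intro sum_fiber) auto
  also have "\<dots> = (\<Sum>a\<in>{1..X m}. real (outdeg E w X m a))"
    by (intro sum.cong refl) (simp add: outdeg_card)
  finally show ?thesis by simp
qed

lemma sumKK: assumes "enat (Suc m) < \<tau>" "w \<in> space M"
  shows "(\<Sum>a\<in>{1..X m}. real (outdeg E w X m a) * (real (outdeg E w X m a) - 1))
        = (\<Sum>i\<in>{1..X m}. real (k m i) * (real (k m i) - 1))"
proof -
  obtain \<sigma> where \<sigma>: "\<sigma> permutes {1..X m}" "\<forall>i \<in> {1..X m}. outdeg E w X m i = k m (\<sigma> i)"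
    using Eperm[OF gd gm assms] by blast
  have "(\<Sum>a\<in>{1..X m}. real (outdeg E w X m a) * (real (outdeg E w X m a) - 1))
      = (\<Sum>a\<in>{1..X m}. (\<lambda>i. real (k m i) * (real (k m i) - 1)) (\<sigma> a))"
    using \<sigma>(2) by (intro sum.cong refl) simp
  also have "\<dots> = (\<Sum>i\<in>{1..X m}. real (k m i) * (real (k m i) - 1))"
    by (rule sum.reindex_bij_betw[OF permutes_imp_bij[OF \<sigma>(1)]])
  finally show ?thesis .
qed

lemma offdiagK: assumes "enat (Suc m) < \<tau>" "w \<in> space M"
  shows "(\<Sum>a\<in>{1..X m}. \<Sum>b\<in>{1..X m}-{a}. real (outdeg E w X m a) * real (outdeg E w X m b))
       = real (X (Suc m)) * (real (X (Suc m)) - 1) * (1 - coal_incr k X m)"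
proof -
  let ?K = "\<lambda>a. real (outdeg E w X m a)"
  let ?S = "{1..X m}"
  have "(\<Sum>a\<in>?S. \<Sum>b\<in>?S-{a}. ?K a * ?K b) = (\<Sum>a\<in>?S. ?K a * (real (X (Suc m)) - ?K a))"
  proof (intro sum.cong refl)
    fix a assume a: "a \<in> ?S"
    have "(\<Sum>b\<in>?S-{a}. ?K a * ?K b) = ?K a * (\<Sum>b\<in>?S-{a}. ?K b)" by (simp add: sum_distrib_left)
    also have "(\<Sum>b\<in>?S-{a}. ?K b) = (\<Sum>b\<in>?S. ?K b) - ?K a" using a by (simp add: sum_diff1)
    finally show "(\<Sum>b\<in>?S-{a}. ?K a * ?K b) = ?K a * (real (X (Suc m)) - ?K a)"
      using sumK[OF assms] by simp
  qed
  also have "\<dots> = real (X (Suc m)) * (\<Sum>a\<in>?S. ?K a) - (\<Sum>a\<in>?S. ?K a * (?K a - 1)) - (\<Sum>a\<in>?S. ?K a)"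
    by (simp add: algebra_simps sum_subtractf sum_distrib_left)
  also have "\<dots> = real (X (Suc m)) * real (X (Suc m)) - (\<Sum>i\<in>?S. real (k m i) * (real (k m i) - 1)) - real (X (Suc m))"
    using sumK[OF assms] sumKK[OF assms] by simp
  also have "\<dots> = real (X (Suc m)) * (real (X (Suc m)) - 1) * (1 - coal_incr k X m)"
  proof -
    have "real (X (Suc m)) * (real (X (Suc m)) - 1) \<noteq> 0" using X2[OF gd gm assms(1)] by simp
    then show ?thesis unfolding coal_incr_def by (simp add: field_simps)
  qed
  finally show ?thesis .
qed

lemma offdiagE: assumes "enat (Suc m) < \<tau>" "w \<in> space M"
  shows "(\<Sum>a\<in>{1..X (Suc m)}. \<Sum>b\<in>{1..X (Suc m)}-{a}. (if E m w a = E m w b then 1 else 0::real))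
       = real (X (Suc m)) * (real (X (Suc m)) - 1) * coal_incr k X m"
proof -
  let ?K = "\<lambda>a. real (outdeg E w X m a)"
  let ?S = "{1..X m}"
  have "(\<Sum>a\<in>{1..X (Suc m)}. \<Sum>b\<in>{1..X (Suc m)}-{a}. (\<lambda>x y. if x = y then 1 else 0::real) (E m w a) (E m w b))
     = (\<Sum>a\<in>?S. \<Sum>b\<in>?S. real (card {x\<in>{1..X (Suc m)}. E m w x = a}) * real (card {x\<in>{1..X (Suc m)}. E m w x = b}) * (if a = b then 1 else 0))
      - (\<Sum>a\<in>?S. real (card {x\<in>{1..X (Suc m)}. E m w x = a}) * (if a = a then 1 else 0))"
    using Erange[OF gd gm assms] by (intro sum_pairs_fiber) auto
  also have "\<dots> = (\<Sum>a\<in>?S. ?K a * ?K a) - (\<Sum>a\<in>?S. ?K a)"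
    by (simp add: outdeg_card if_distrib cong: if_cong) 
  also have "\<dots> = (\<Sum>a\<in>?S. ?K a * (?K a - 1))" by (simp add: algebra_simps sum_subtractf)
  also have "\<dots> = (\<Sum>i\<in>?S. real (k m i) * (real (k m i) - 1))" by (rule sumKK[OF assms])
  also have "\<dots> = real (X (Suc m)) * (real (X (Suc m)) - 1) * coal_incr k X m"
  proof -
    have "real (X (Suc m)) * (real (X (Suc m)) - 1) \<noteq> 0" using X2[OF gd gm assms(1)] by simp
    then show ?thesis unfolding coal_incr_def by (simp add: field_simps)
  qed
  finally show ?thesis by simp
qed

end

lemma anc_restrict: "n + d \<le> m \<Longrightarrow> anc (\<lambda>j F. F j) (\<lambda>j\<in>{..<m}. E j w) n d a = anc E w n d a"
  by (induction d arbitrary: n) auto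

lemma anc_restrict2: "(\<And>j. n \<le> j \<Longrightarrow> j < n + d \<Longrightarrow> j \<in> I) \<Longrightarrow> anc (\<lambda>j F. F j) (\<lambda>j\<in>I. E j w) n d a = anc E w n d a"
  by (induction d arbitrary: n) auto

lemma PiM_eq_set:
  assumes "\<And>j. n \<le> j \<Longrightarrow> j < n + d \<Longrightarrow> j \<in> I"
  shows "{F \<in> space (PiM I (\<lambda>_. count_space (UNIV :: (nat \<Rightarrow> nat) set))).
           anc (\<lambda>j F. F j) F n d a = anc (\<lambda>j F. F j) F n d b} \<in> sets (PiM I (\<lambda>_. count_space UNIV))"
  by (intro eq_set_meas anc_meas) (auto intro!: measurable_component_singleton assms)

lemma Kbound: "outdeg E w X m a \<le> X (Suc m)"
proof -
  have "card {j\<in>{1..X (Suc m)}. E m w j = a} \<le> card {1..X (Suc m)}" by (intro card_mono) auto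
  then show ?thesis unfolding outdeg_def by auto
qed

context
  fixes M :: "'a measure" and \<tau> :: enat and X :: "nat \<Rightarrow> nat"
    and k :: "nat \<Rightarrow> nat \<Rightarrow> nat" and E :: "nat \<Rightarrow> 'a \<Rightarrow> nat \<Rightarrow> nat"
  assumes gd: "genealogy_data \<tau> X k"
    and gm: "genealogy_model M \<tau> X k E"
    and fw: "forward_neutral M \<tau> X E"
begin

interpretation prob_space M by (rule PS[OF gd gm])

lemma fw_exch: "enat (Suc m) < \<tau> \<Longrightarrow> \<sigma> permutes {1..X m} \<Longrightarrow>
   distr M (count_space UNIV) (\<lambda>w. outdeg E w X m \<circ> \<sigma>) = distr M (count_space UNIV) (\<lambda>w. outdeg E w X m)"
  using fw unfolding forward_neutral_def by blast

lemma fw_ind: "enat (Suc m) < \<tau> \<Longrightarrow> indep_rv M (count_space UNIV) (\<lambda>w. outdeg E w X m)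
           (PiM {..<m} (\<lambda>_. count_space (UNIV :: (nat \<Rightarrow> nat) set))) (\<lambda>w. \<lambda>j\<in>{..<m}. E j w)"
  using fw unfolding forward_neutral_def by blast

lemma Kmeas: "enat (Suc m) < \<tau> \<Longrightarrow> (\<lambda>w. outdeg E w X m) \<in> measurable M (count_space UNIV)"
  using fw_ind unfolding indep_rv_def by blast

lemma Kimeas: "enat (Suc m) < \<tau> \<Longrightarrow> (\<lambda>w. real (outdeg E w X m a)) \<in> borel_measurable M"
  by (rule real_nat_meas, rule measurable_compose[OF Kmeas]) auto

lemma cK_const:
  assumes m: "enat (Suc m) < \<tau>" and S: "a \<in> {1..X m}" "b \<in> {1..X m}" "a' \<in> {1..X m}" "b' \<in> {1..X m}"
    and "a \<noteq> b" "a' \<noteq> b'"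
  shows "(\<integral>w. real (outdeg E w X m a) * real (outdeg E w X m b) \<partial>M)
       = (\<integral>w. real (outdeg E w X m a') * real (outdeg E w X m b') \<partial>M)"
proof -
  obtain \<sigma> where \<sigma>: "\<sigma> permutes {1..X m}" "\<sigma> a' = a" "\<sigma> b' = b"
    using two_point_perm[of a' "{1..X m}" b' a b] assms by blast
  define g where "g F = real (F a') * real (F b')" for F :: "nat \<Rightarrow> nat"
  have gm': "g \<in> borel_measurable (count_space UNIV)" by simp
  have Ksm: "(\<lambda>w. outdeg E w X m \<circ> \<sigma>) \<in> measurable M (count_space UNIV)"
    by (rule measurable_compose[OF Kmeas[OF m]]) auto
  have "(\<integral>w. real (outdeg E w X m a) * real (outdeg E w X m b) \<partial>M) = (\<integral>w. g (outdeg E w X m \<circ> \<sigma>) \<partial>M)"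
    unfolding g_def using \<sigma> by simp
  also have "\<dots> = integral\<^sup>L (distr M (count_space UNIV) (\<lambda>w. outdeg E w X m \<circ> \<sigma>)) g"
    by (rule integral_distr[OF Ksm gm', symmetric])
  also have "\<dots> = integral\<^sup>L (distr M (count_space UNIV) (\<lambda>w. outdeg E w X m)) g"
    by (simp add: fw_exch[OF m \<sigma>(1)])
  also have "\<dots> = (\<integral>w. g (outdeg E w X m) \<partial>M)"
    by (rule integral_distr[OF Kmeas[OF m] gm'])
  finally show ?thesis unfolding g_def .
qed

end

context
  fixes M :: "'a measure" and \<tau> :: enat and X :: "nat \<Rightarrow> nat"
    and k :: "nat \<Rightarrow> nat \<Rightarrow> nat" and E :: "nat \<Rightarrow> 'a \<Rightarrow> nat \<Rightarrow> nat"
  assumes gd: "genealogy_data \<tau> X k"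
    and gm: "genealogy_model M \<tau> X k E"
    and fw: "forward_neutral M \<tau> X E"
begin

interpretation prob_space M by (rule PS[OF gd gm])

lemma fwd_indep:
  assumes m: "enat (Suc m) < \<tau>" and nm: "n \<le> m"
  shows "(\<integral>w. real (outdeg E w X m a) * real (outdeg E w X m b) * indicator (Dset M E n m a b) w \<partial>M)
       = (\<integral>w. real (outdeg E w X m a) * real (outdeg E w X m b) \<partial>M) * measure M (Dset M E n m a b)"
proof -
  define N where "N = PiM {..<m} (\<lambda>_. count_space (UNIV :: (nat \<Rightarrow> nat) set))"
  define Y where "Y = (\<lambda>w. \<lambda>j\<in>{..<m}. E j w)"
  define d where "d = m - n"
  have nd: "n + d = m" unfolding d_def using nm by simp
  define T where "T = space N - {F \<in> space N. anc (\<lambda>j F. F j) F n d a = anc (\<lambda>j F. F j) F n d b}"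
  have T: "T \<in> sets N" unfolding T_def N_def
    by (intro sets.Diff sets.top PiM_eq_set) (use nd in auto)
  have ind: "indep_rv M (count_space UNIV) (\<lambda>w. outdeg E w X m) N Y"
    unfolding N_def Y_def by (rule fw_ind[OF gd gm fw m])
  have Ym: "Y \<in> measurable M N" using ind unfolding indep_rv_def by blast
  have YT: "Y -` T \<inter> space M = Dset M E n m a b"
  proof -
    have "Y w \<in> space N" if "w \<in> space M" for w using measurable_space[OF Ym that] .
    moreover have "anc (\<lambda>j F. F j) (Y w) n d x = anc E w n d x" for w x
      unfolding Y_def by (rule anc_restrict) (use nd in simp)
    ultimately show ?thesis unfolding T_def Dset_def d_def by auto
  qed
  define R where "R = (\<lambda>(u, v). real u * real v) ` ({..X (Suc m)} \<times> {..X (Suc m)})"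
  have R: "finite R" "\<forall>w\<in>space M. real (outdeg E w X m a) * real (outdeg E w X m b) \<in> R"
  proof -
    show "finite R" unfolding R_def by simp
    show "\<forall>w\<in>space M. real (outdeg E w X m a) * real (outdeg E w X m b) \<in> R"
    proof
      fix w
      show "real (outdeg E w X m a) * real (outdeg E w X m b) \<in> R"
        unfolding R_def by (rule image_eqI[where x="(outdeg E w X m a, outdeg E w X m b)"]) (auto intro: Kbound)
    qed
  qed
  from indep_fin_int[where f="\<lambda>F. real (F a) * real (F b)", OF PS[OF gd gm] ind T R(1)] R(2) show ?thesis unfolding YT by simp
qed

lemma fwd_step:
  assumes m: "enat (Suc m) < \<tau>" and nm: "n \<le> m"
  shows "Rs M X E n (Suc m) = (\<Sum>a\<in>{1..X m}. \<Sum>b\<in>{1..X m}-{a}.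
      (\<integral>w. real (outdeg E w X m a) * real (outdeg E w X m b) \<partial>M) * measure M (Dset M E n m a b))"
proof -
  define d where "d = m - n"
  have nd: "n + d = m" unfolding d_def using nm by simp
  have m': "enat m < \<tau>" using m by (rule enat_le_less[rotated]) simp
  define V where "V = {1..X m}"
  define V' where "V' = {1..X (Suc m)}"
  define K where "K w a = real (outdeg E w X m a)" for w a
  define F where "F w a b = (indicator (Dset M E n m a b) w :: real)" for w a b
  have Dsuc: "Dset M E n (Suc m) i j = {w \<in> space M. anc E w n d (E m w i) \<noteq> anc E w n d (E m w j)}" for i j
  proof -
    have "Suc m - n = Suc d" using nd by simp
    then show ?thesis unfolding Dset_def using anc_shift[of E _ n d] nd by simp
  qed
  have ind_eq: "indicator (Dset M E n (Suc m) i j) w = F w (E m w i) (E m w j)" if w: "w \<in> space M" for w i j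
    using w by (simp only: Dsuc) (simp add: F_def Dset_def d_def indicator_def)
  have Faa: "F w a a = 0" for w a by (simp add: F_def Dset_def)
  have cardK: "real (card {x\<in>V'. E m w x = a}) = K w a" if "a \<in> V" for w a
    using that unfolding K_def V_def V'_def by (simp add: outdeg_def)
  have pw: "(\<Sum>i\<in>V'. \<Sum>j\<in>V'-{i}. indicator (Dset M E n (Suc m) i j) w)
      = (\<Sum>a\<in>V. \<Sum>b\<in>V-{a}. K w a * K w b * F w a b)" if w: "w \<in> space M" for w
  proof -
    have "(\<Sum>i\<in>V'. \<Sum>j\<in>V'-{i}. indicator (Dset M E n (Suc m) i j) w)
        = (\<Sum>i\<in>V'. \<Sum>j\<in>V'-{i}. F w (E m w i) (E m w j))"
      by (simp only: ind_eq[OF w])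
    also have "\<dots> = (\<Sum>a\<in>V. \<Sum>b\<in>V. real (card {x\<in>V'. E m w x = a}) * real (card {x\<in>V'. E m w x = b}) * F w a b)
      - (\<Sum>a\<in>V. real (card {x\<in>V'. E m w x = a}) * F w a a)"
      using Erange[OF gd gm m w] unfolding V_def V'_def by (intro sum_pairs_fiber) auto
    also have "\<dots> = (\<Sum>a\<in>V. \<Sum>b\<in>V. K w a * K w b * F w a b)"
      by (simp add: Faa cardK)
    also have "\<dots> = (\<Sum>a\<in>V. \<Sum>b\<in>V-{a}. K w a * K w b * F w a b)"
    proof (rule sum.cong[OF refl])
      fix a assume a: "a \<in> V"
      have fV: "finite V" unfolding V_def by simp
      show "(\<Sum>b\<in>V. K w a * K w b * F w a b) = (\<Sum>b\<in>V-{a}. K w a * K w b * F w a b)"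
        using sum.remove[OF fV a, of "\<lambda>b. K w a * K w b * F w a b"] by (simp add: Faa)
    qed
    finally show ?thesis .
  qed
  have intg: "integrable M (\<lambda>w. K w a * K w b * F w a b)" for a b
  proof (rule integrable_const_bound[where B="real (X (Suc m)) * real (X (Suc m))"])
    show "AE w in M. norm (K w a * K w b * F w a b) \<le> real (X (Suc m)) * real (X (Suc m))"
      using Kbound unfolding K_def F_def by (intro AE_I2) (auto simp: indicator_def intro!: mult_mono)
    show "(\<lambda>w. K w a * K w b * F w a b) \<in> borel_measurable M"
      unfolding K_def F_def using Kimeas[OF gd gm fw m] Dset_sets[OF gd gm m' nm]
      by (intro borel_measurable_times borel_measurable_indicator) auto
  qed
  have "Rs M X E n (Suc m) = (\<Sum>i\<in>V'. \<Sum>j\<in>V'-{i}. \<integral>w. indicator (Dset M E n (Suc m) i j) w \<partial>M)"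
    unfolding Rs_def V'_def using Dset_sets[OF gd gm m] by (intro sum.cong refl) (auto simp: Dset_def Int_absorb2)
  also have "\<dots> = (\<integral>w. (\<Sum>i\<in>V'. \<Sum>j\<in>V'-{i}. indicator (Dset M E n (Suc m) i j) w) \<partial>M)"
  proof -
    have intI: "integrable M (indicator (Dset M E n (Suc m) i j) :: _ \<Rightarrow> real)" for i j
      using Dset_sets[OF gd gm m, of n i j] nm by (intro integrable_real_indicator) (auto simp: less_top[symmetric])
    show ?thesis by (simp add: intI)
  qed
  also have "\<dots> = (\<integral>w. (\<Sum>a\<in>V. \<Sum>b\<in>V-{a}. K w a * K w b * F w a b) \<partial>M)"
    by (rule Bochner_Integration.integral_cong[OF refl]) (simp add: pw)
  also have "\<dots> = (\<Sum>a\<in>V. \<Sum>b\<in>V-{a}. \<integral>w. K w a * K w b * F w a b \<partial>M)"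
    using intg by (simp add: integral_sum)
  also have "\<dots> = (\<Sum>a\<in>V. \<Sum>b\<in>V-{a}. (\<integral>w. K w a * K w b \<partial>M) * measure M (Dset M E n m a b))"
    unfolding K_def F_def by (simp add: fwd_indep[OF m nm])
  finally show ?thesis unfolding K_def V_def .
qed

end

context
  fixes M :: "'a measure" and \<tau> :: enat and X :: "nat \<Rightarrow> nat"
    and k :: "nat \<Rightarrow> nat \<Rightarrow> nat" and E :: "nat \<Rightarrow> 'a \<Rightarrow> nat \<Rightarrow> nat"
  assumes gd: "genealogy_data \<tau> X k"
    and gm: "genealogy_model M \<tau> X k E"
    and fw: "forward_neutral M \<tau> X E"
begin

interpretation prob_space M by (rule PS[OF gd gm])

lemma intKK: "enat (Suc m) < \<tau> \<Longrightarrow> integrable M (\<lambda>w. real (outdeg E w X m a) * real (outdeg E w X m b))"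
  by (rule integrable_const_bound[where B="real (X (Suc m)) * real (X (Suc m))"])
     (auto intro!: AE_I2 mult_mono Kbound borel_measurable_times Kimeas[OF gd gm fw])

lemma fwd_main:
  assumes "n \<le> m" "enat m < \<tau>"
  shows "Rs M X E n m = real (X m) * (real (X m) - 1) * (\<Prod>j\<in>{n..<m}. 1 - coal_incr k X j)"
  using assms
proof (induction m rule: dec_induct)
  case base
  then show ?case using Rs_base[OF gd gm] by simp
next
  case (step m)
  have m: "enat (Suc m) < \<tau>" using step by simp
  have m': "enat m < \<tau>" using m by (rule enat_le_less[rotated]) simp
  have IH: "Rs M X E n m = real (X m) * (real (X m) - 1) * (\<Prod>j\<in>{n..<m}. 1 - coal_incr k X j)"
    using step m' by simp
  define V where "V = {1..X m}"
  define cK where "cK a b = (\<integral>w. real (outdeg E w X m a) * real (outdeg E w X m b) \<partial>M)" for a b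
  have RS: "Rs M X E n (Suc m) = (\<Sum>a\<in>V. \<Sum>b\<in>V-{a}. cK a b * measure M (Dset M E n m a b))"
    unfolding V_def cK_def by (rule fwd_step[OF gd gm fw m step(1)])
  obtain w0 where w0: "w0 \<in> space M" using not_empty by blast
  have sumcK: "(\<Sum>a\<in>V. \<Sum>b\<in>V-{a}. cK a b) = real (X (Suc m)) * (real (X (Suc m)) - 1) * (1 - coal_incr k X m)"
  proof -
    have "(\<Sum>a\<in>V. \<Sum>b\<in>V-{a}. cK a b)
        = (\<integral>w. (\<Sum>a\<in>V. \<Sum>b\<in>V-{a}. real (outdeg E w X m a) * real (outdeg E w X m b)) \<partial>M)"
      unfolding cK_def using intKK[OF m] by (simp add: integral_sum)
    also have "\<dots> = (\<integral>w. real (X (Suc m)) * (real (X (Suc m)) - 1) * (1 - coal_incr k X m) \<partial>M)"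
      unfolding V_def by (rule Bochner_Integration.integral_cong[OF refl]) (rule offdiagK[OF gd gm m])
    also have "\<dots> = real (X (Suc m)) * (real (X (Suc m)) - 1) * (1 - coal_incr k X m)"
      by (simp add: prob_space)
    finally show ?thesis .
  qed
  show ?case
  proof (cases "X m \<ge> 2")
    case True
    have V12: "1 \<in> V" "2 \<in> V" unfolding V_def using True by auto
    define c0 where "c0 = cK 1 2"
    have cc: "cK a b = c0" if "a \<in> V" "b \<in> V" "a \<noteq> b" for a b
      unfolding c0_def cK_def using that V12 unfolding V_def by (intro cK_const[OF gd gm fw m]) auto
    have "Rs M X E n (Suc m) = (\<Sum>a\<in>V. \<Sum>b\<in>V-{a}. c0 * measure M (Dset M E n m a b))"
      unfolding RS by (intro sum.cong refl) (auto simp: cc)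
    also have "\<dots> = c0 * Rs M X E n m" unfolding Rs_def V_def by (simp add: sum_distrib_left)
    also have "(\<Sum>a\<in>V. \<Sum>b\<in>V-{a}. cK a b) = c0 * real (card V) * (real (card V) - 1)"
      by (rule sum_offdiag_const) (auto simp: V_def cc)
    then have "c0 * real (X m) * (real (X m) - 1) = (\<Sum>a\<in>V. \<Sum>b\<in>V-{a}. cK a b)"
      by (simp add: V_def)
    then have "c0 * real (X m) * (real (X m) - 1) = real (X (Suc m)) * (real (X (Suc m)) - 1) * (1 - coal_incr k X m)"
      using sumcK by simp
    then have "c0 * Rs M X E n m = real (X (Suc m)) * (real (X (Suc m)) - 1) * (1 - coal_incr k X m) * (\<Prod>j\<in>{n..<m}. 1 - coal_incr k X j)"
      unfolding IH by (simp add: mult.assoc [symmetric])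
    also have "\<dots> = real (X (Suc m)) * (real (X (Suc m)) - 1) * (\<Prod>j\<in>{n..<Suc m}. 1 - coal_incr k X j)"
      using step(1) by (simp add: prod.atLeastLessThan_Suc)
    finally show ?thesis .
  next
    case False
    have "X m \<ge> 1" using Xpos[OF gd gm m'] .
    with False have X1: "X m = 1" by simp
    then have "V = {1}" unfolding V_def by auto
    then have "Rs M X E n (Suc m) = 0" unfolding RS by simp
    moreover have "real (X (Suc m)) * (real (X (Suc m)) - 1) * (1 - coal_incr k X m) = 0"
      using sumcK \<open>V = {1}\<close> by simp
    ultimately show ?thesis using step(1) by (simp add: prod.atLeastLessThan_Suc) blast
  qed
qed

end

lemma sum_pair_delta:
  fixes h :: "nat \<Rightarrow> nat \<Rightarrow> real"
  assumes "finite S" "x \<in> S" "y \<in> S"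
  shows "(\<Sum>a\<in>S. \<Sum>b\<in>S-{a}. (if a = x \<and> b = y then h a b else 0)) = (if x \<noteq> y then h x y else 0)"
proof -
  have "(\<Sum>a\<in>S. \<Sum>b\<in>S-{a}. (if a = x \<and> b = y then h a b else 0))
      = (\<Sum>a\<in>S. if a = x then (if x \<noteq> y then h x y else 0) else 0)"
  proof (rule sum.cong[OF refl])
    fix a assume a: "a \<in> S"
    show "(\<Sum>b\<in>S-{a}. (if a = x \<and> b = y then h a b else 0)) = (if a = x then (if x \<noteq> y then h x y else 0) else 0)"
    proof (cases "a = x")
      case True
      then have "(\<Sum>b\<in>S-{a}. (if a = x \<and> b = y then h a b else 0)) = (\<Sum>b\<in>S-{a}. (if b = y then h x b else 0))"
        by (intro sum.cong refl) auto
      also have "\<dots> = (if y \<in> S - {a} then h x y else 0)" using assms(1) by (simp add: sum.delta')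
      finally show ?thesis using True assms by auto
    qed simp
  qed
  also have "\<dots> = (if x \<noteq> y then h x y else 0)" using assms by (simp add: sum.delta')
  finally show ?thesis .
qed

lemma anc_restrict_bw: "(\<And>j. n \<le> j \<Longrightarrow> j < n + d \<Longrightarrow> j \<in> I) \<Longrightarrow> anc (\<lambda>j F. F j) (\<lambda>j\<in>I. E j w) n d a = anc E w n d a"
  by (rule anc_restrict2)

context
  fixes M :: "'a measure" and \<tau> :: enat and X :: "nat \<Rightarrow> nat"
    and k :: "nat \<Rightarrow> nat \<Rightarrow> nat" and E :: "nat \<Rightarrow> 'a \<Rightarrow> nat \<Rightarrow> nat"
  assumes gd: "genealogy_data \<tau> X k"
    and gm: "genealogy_model M \<tau> X k E"
    and bw: "backward_neutral M \<tau> X E"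
begin

interpretation prob_space M by (rule PS[OF gd gm])

lemma bw_exch: "enat (Suc n) < \<tau> \<Longrightarrow> \<sigma> permutes {1..X (Suc n)} \<Longrightarrow>
     distr M (count_space UNIV) (\<lambda>w. (\<lambda>B. \<sigma> ` B) ` sibpart E w X n)
             = distr M (count_space UNIV) (\<lambda>w. sibpart E w X n)"
  using bw unfolding backward_neutral_def by blast

lemma bw_ind: "enat (Suc n) < \<tau> \<Longrightarrow> indep_rv M (count_space UNIV) (\<lambda>w. sibpart E w X n)
           (PiM {m. n < m \<and> enat (Suc m) < \<tau>} (\<lambda>_. count_space (UNIV :: (nat \<Rightarrow> nat) set)))
           (\<lambda>w. \<lambda>m\<in>{m. n < m \<and> enat (Suc m) < \<tau>}. E m w)"
  using bw unfolding backward_neutral_def by blast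

lemma Ximeas: "enat (Suc n) < \<tau> \<Longrightarrow> (\<lambda>w. sibpart E w X n) \<in> measurable M (count_space UNIV)"
  using bw_ind unfolding indep_rv_def by blast

lemma same_sib:
  assumes n: "enat (Suc n) < \<tau>" and w: "w \<in> space M" and ab: "a \<in> {1..X (Suc n)}" "b \<in> {1..X (Suc n)}"
  shows "E n w a = E n w b \<longleftrightarrow> (\<exists>B\<in>sibpart E w X n. a \<in> B \<and> b \<in> B)"
proof
  assume eq: "E n w a = E n w b"
  let ?B = "{j \<in> {1..X (Suc n)}. E n w j = E n w a}"
  have Ea: "E n w a \<in> {1..X n}" using Erange[OF gd gm n w ab(1)] .
  have Bne: "?B \<noteq> {}" using ab by auto
  have "?B \<in> {{j \<in> {1..X (Suc n)}. E n w j = i} | i. i \<in> {1..X n}}"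
    by (rule CollectI, rule exI[of _ "E n w a"]) (use Ea in auto)
  then have B1: "?B \<in> sibpart E w X n" unfolding sibpart_def using Bne by (intro DiffI) auto
  have B2: "a \<in> ?B \<and> b \<in> ?B" using ab eq by auto
  show "\<exists>B\<in>sibpart E w X n. a \<in> B \<and> b \<in> B" by (rule bexI[where x="?B" and P="\<lambda>B. a \<in> B \<and> b \<in> B", OF B2 B1])
next
  assume "\<exists>B\<in>sibpart E w X n. a \<in> B \<and> b \<in> B"
  then show "E n w a = E n w b" unfolding sibpart_def by auto
qed

definition SS :: "nat \<Rightarrow> nat \<Rightarrow> nat set set set" where
  "SS a b = {P. \<exists>B\<in>P. a \<in> B \<and> b \<in> B}"

lemma Sm_eq: "enat (Suc n) < \<tau> \<Longrightarrow> a \<in> {1..X (Suc n)} \<Longrightarrow> b \<in> {1..X (Suc n)} \<Longrightarrow>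
   {w \<in> space M. E n w a = E n w b} = (\<lambda>w. sibpart E w X n) -` SS a b \<inter> space M"
  using same_sib unfolding SS_def by auto

lemma cS_const:
  assumes n: "enat (Suc n) < \<tau>" and S: "a \<in> {1..X (Suc n)}" "b \<in> {1..X (Suc n)}"
    "a' \<in> {1..X (Suc n)}" "b' \<in> {1..X (Suc n)}" and "a \<noteq> b" "a' \<noteq> b'"
  shows "measure M {w \<in> space M. E n w a = E n w b} = measure M {w \<in> space M. E n w a' = E n w b'}"
proof -
  obtain \<sigma> where \<sigma>: "\<sigma> permutes {1..X (Suc n)}" "\<sigma> a = a'" "\<sigma> b = b'"
    using two_point_perm[of a "{1..X (Suc n)}" b a' b'] assms by blast
  have inj: "inj \<sigma>" using permutes_inj[OF \<sigma>(1)] .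
  have fm: "(\<lambda>w. (\<lambda>B. \<sigma> ` B) ` sibpart E w X n) \<in> measurable M (count_space UNIV)"
    by (rule measurable_compose[OF Ximeas[OF n]]) auto
  have pre: "(\<lambda>w. (\<lambda>B. \<sigma> ` B) ` sibpart E w X n) -` SS a' b' \<inter> space M
      = (\<lambda>w. sibpart E w X n) -` SS a b \<inter> space M"
  proof -
    have "a' \<in> \<sigma> ` B \<longleftrightarrow> a \<in> B" "b' \<in> \<sigma> ` B \<longleftrightarrow> b \<in> B" for B
      using inj_image_mem_iff[OF inj, of a B] inj_image_mem_iff[OF inj, of b B] \<sigma>(2,3) by simp_all
    then show ?thesis unfolding SS_def by auto
  qed
  have "measure M {w \<in> space M. E n w a = E n w b} = measure M ((\<lambda>w. sibpart E w X n) -` SS a b \<inter> space M)"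
    by (simp add: Sm_eq[OF n S(1,2)])
  also have "\<dots> = measure (distr M (count_space UNIV) (\<lambda>w. (\<lambda>B. \<sigma> ` B) ` sibpart E w X n)) (SS a' b')"
    by (subst measure_distr[OF fm]) (auto simp: pre)
  also have "\<dots> = measure (distr M (count_space UNIV) (\<lambda>w. sibpart E w X n)) (SS a' b')"
    by (simp add: bw_exch[OF n \<sigma>(1)])
  also have "\<dots> = measure M ((\<lambda>w. sibpart E w X n) -` SS a' b' \<inter> space M)"
    by (subst measure_distr[OF Ximeas[OF n]]) auto
  also have "\<dots> = measure M {w \<in> space M. E n w a' = E n w b'}"
    by (simp add: Sm_eq[OF n S(3,4)])
  finally show ?thesis .
qed

end

context
  fixes M :: "'a measure" and \<tau> :: enat and X :: "nat \<Rightarrow> nat"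
    and k :: "nat \<Rightarrow> nat \<Rightarrow> nat" and E :: "nat \<Rightarrow> 'a \<Rightarrow> nat \<Rightarrow> nat"
  assumes gd: "genealogy_data \<tau> X k"
    and gm: "genealogy_model M \<tau> X k E"
    and bw: "backward_neutral M \<tau> X E"
begin

interpretation prob_space M by (rule PS[OF gd gm])

lemma Sm_sets: "enat (Suc n) < \<tau> \<Longrightarrow> {w \<in> space M. E n w a = E n w b} \<in> events"
  by (intro eq_set_meas; rule measurable_compose[OF Emeas[OF gd gm]]) auto

lemma Sm_prob:
  assumes n: "enat (Suc n) < \<tau>" and ab: "a \<in> {1..X (Suc n)}" "b \<in> {1..X (Suc n)}" "a \<noteq> b"
  shows "measure M {w \<in> space M. E n w a = E n w b} = coal_incr k X n"
proof -
  define V' where "V' = {1..X (Suc n)}"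
  have X2': "X (Suc n) \<ge> 2" using X2[OF gd gm n] .
  have V12: "1 \<in> V'" "2 \<in> V'" unfolding V'_def using X2' by auto
  define c0 where "c0 = measure M {w \<in> space M. E n w 1 = E n w 2}"
  have cc: "measure M {w \<in> space M. E n w a = E n w b} = c0" if "a \<in> V'" "b \<in> V'" "a \<noteq> b" for a b
    unfolding c0_def using that V12 unfolding V'_def by (intro cS_const[OF gd gm bw n]) auto
  have "(\<Sum>a\<in>V'. \<Sum>b\<in>V'-{a}. measure M {w \<in> space M. E n w a = E n w b}) = c0 * real (card V') * (real (card V') - 1)"
    by (rule sum_offdiag_const) (auto simp: V'_def intro: cc[unfolded V'_def])
  moreover have "(\<Sum>a\<in>V'. \<Sum>b\<in>V'-{a}. measure M {w \<in> space M. E n w a = E n w b})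
      = real (X (Suc n)) * (real (X (Suc n)) - 1) * coal_incr k X n"
  proof -
    have intI: "integrable M (indicator {w \<in> space M. E n w a = E n w b} :: _ \<Rightarrow> real)" for a b
      using Sm_sets[OF n, of a b] by (intro integrable_real_indicator) (auto simp: less_top[symmetric])
    have "(\<Sum>a\<in>V'. \<Sum>b\<in>V'-{a}. measure M {w \<in> space M. E n w a = E n w b})
        = (\<Sum>a\<in>V'. \<Sum>b\<in>V'-{a}. \<integral>w. indicator {w \<in> space M. E n w a = E n w b} w \<partial>M)"
      by (simp add: Int_absorb2)
    also have "\<dots> = (\<integral>w. (\<Sum>a\<in>V'. \<Sum>b\<in>V'-{a}. indicator {w \<in> space M. E n w a = E n w b} w) \<partial>M)"
      by (simp add: intI)
    also have "\<dots> = (\<integral>w. real (X (Suc n)) * (real (X (Suc n)) - 1) * coal_incr k X n \<partial>M)"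
    proof (rule Bochner_Integration.integral_cong[OF refl])
      fix w assume w: "w \<in> space M"
      have "(\<Sum>a\<in>V'. \<Sum>b\<in>V'-{a}. indicator {w \<in> space M. E n w a = E n w b} w)
          = (\<Sum>a\<in>V'. \<Sum>b\<in>V'-{a}. (if E n w a = E n w b then 1 else 0::real))"
        using w by (intro sum.cong refl) (simp add: indicator_def)
      also have "\<dots> = real (X (Suc n)) * (real (X (Suc n)) - 1) * coal_incr k X n"
        unfolding V'_def by (rule offdiagE[OF gd gm n w])
      finally show "(\<Sum>a\<in>V'. \<Sum>b\<in>V'-{a}. indicator {w \<in> space M. E n w a = E n w b} w :: real)
          = real (X (Suc n)) * (real (X (Suc n)) - 1) * coal_incr k X n" .
    qed
    also have "\<dots> = real (X (Suc n)) * (real (X (Suc n)) - 1) * coal_incr k X n" by (simp add: prob_space)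
    finally show ?thesis .
  qed
  ultimately have "c0 * (real (X (Suc n)) * (real (X (Suc n)) - 1)) = coal_incr k X n * (real (X (Suc n)) * (real (X (Suc n)) - 1))"
    unfolding V'_def by (simp add: mult_ac)
  moreover have "real (X (Suc n)) * (real (X (Suc n)) - 1) \<noteq> 0" using X2' by simp
  ultimately have "c0 = coal_incr k X n" by simp
  with cc ab show ?thesis unfolding V'_def by simp
qed

end

context
  fixes M :: "'a measure" and \<tau> :: enat and X :: "nat \<Rightarrow> nat"
    and k :: "nat \<Rightarrow> nat \<Rightarrow> nat" and E :: "nat \<Rightarrow> 'a \<Rightarrow> nat \<Rightarrow> nat"
  assumes gd: "genealogy_data \<tau> X k"
    and gm: "genealogy_model M \<tau> X k E"
    and bw: "backward_neutral M \<tau> X E"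
begin

interpretation prob_space M by (rule PS[OF gd gm])

lemma bw_pair:
  assumes m: "enat m < \<tau>" and nm: "Suc n \<le> m" and ij: "i \<in> {1..X m}" "j \<in> {1..X m}"
  shows "measure M (Dset M E n m i j) = (1 - coal_incr k X n) * measure M (Dset M E (Suc n) m i j)"
proof -
  have n: "enat (Suc n) < \<tau>" using m nm by (rule enat_le_less[rotated])
  define d where "d = m - Suc n"
  have nd: "Suc n + d = m" unfolding d_def using nm by simp
  define V' where "V' = {1..X (Suc n)}"
  define A where "A x w = anc E w (Suc n) d x" for x w
  define G where "G a b = {w \<in> space M. A i w = a \<and> A j w = b}" for a b
  define S' where "S' a b = space M - {w \<in> space M. E n w a = E n w b}" for a b
  have Arange: "A x w \<in> V'" if "w \<in> space M" "x \<in> {1..X m}" for x w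
  proof -
    have x: "x \<in> {1..X (Suc n + d)}" using that(2) nd by simp
    have t: "enat (Suc n + d) < \<tau>" using m nd by simp
    show ?thesis unfolding A_def V'_def using anc_range[OF gd gm t that(1) x] .
  qed
  have D1: "Dset M E n m i j = {w \<in> space M. E n w (A i w) \<noteq> E n w (A j w)}"
  proof -
    have "m - n = Suc d" using nd by simp
    then show ?thesis unfolding Dset_def A_def by simp
  qed
  have D2: "Dset M E (Suc n) m i j = {w \<in> space M. A i w \<noteq> A j w}"
    unfolding Dset_def A_def d_def by simp
  have fV: "finite V'" unfolding V'_def by simp
  have pw1: "indicator (Dset M E n m i j) w = (\<Sum>a\<in>V'. \<Sum>b\<in>V'-{a}. indicator (G a b \<inter> S' a b) w :: real)"
    if w: "w \<in> space M" for w
  proof -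
    have "(\<Sum>a\<in>V'. \<Sum>b\<in>V'-{a}. indicator (G a b \<inter> S' a b) w :: real)
        = (\<Sum>a\<in>V'. \<Sum>b\<in>V'-{a}. if a = A i w \<and> b = A j w then (if E n w a = E n w b then 0 else 1) else 0)"
      using w unfolding G_def S'_def by (intro sum.cong refl) (auto simp: indicator_def)
    also have "\<dots> = (if A i w \<noteq> A j w then (if E n w (A i w) = E n w (A j w) then 0 else 1) else 0)"
      by (rule sum_pair_delta[OF fV Arange[OF w ij(1)] Arange[OF w ij(2)]])
    also have "\<dots> = indicator (Dset M E n m i j) w" unfolding D1 using w by (auto simp: indicator_def)
    finally show ?thesis by simp
  qed
  have pw2: "indicator (Dset M E (Suc n) m i j) w = (\<Sum>a\<in>V'. \<Sum>b\<in>V'-{a}. indicator (G a b) w :: real)"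
    if w: "w \<in> space M" for w
  proof -
    have "(\<Sum>a\<in>V'. \<Sum>b\<in>V'-{a}. indicator (G a b) w :: real)
        = (\<Sum>a\<in>V'. \<Sum>b\<in>V'-{a}. if a = A i w \<and> b = A j w then 1 else 0)"
      using w unfolding G_def by (intro sum.cong refl) (auto simp: indicator_def)
    also have "\<dots> = (if A i w \<noteq> A j w then 1 else 0)"
      by (rule sum_pair_delta[OF fV Arange[OF w ij(1)] Arange[OF w ij(2)]])
    also have "\<dots> = indicator (Dset M E (Suc n) m i j) w" unfolding D2 using w by (auto simp: indicator_def)
    finally show ?thesis by simp
  qed
  define I where "I = {m. n < m \<and> enat (Suc m) < \<tau>}"
  define N where "N = PiM I (\<lambda>_. count_space (UNIV :: (nat \<Rightarrow> nat) set))"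
  define Y where "Y = (\<lambda>w. \<lambda>m\<in>I. E m w)"
  have ind: "indep_rv M (count_space UNIV) (\<lambda>w. sibpart E w X n) N Y"
    unfolding N_def Y_def I_def by (rule bw_ind[OF gd gm bw n])
  have Ym: "Y \<in> measurable M N" using ind unfolding indep_rv_def by blast
  have indS: "indep_set {(\<lambda>w. sibpart E w X n) -` S \<inter> space M | S. S \<in> sets (count_space UNIV)}
      {Y -` S \<inter> space M | S. S \<in> sets N}" using ind unfolding indep_rv_def by blast
  have dI: "j' \<in> I" if "Suc n \<le> j'" "j' < Suc n + d" for j'
    unfolding I_def using that m nd by (auto elim: enat_le_less[rotated])
  have AY: "anc (\<lambda>j F. F j) (Y w) (Suc n) d x = A x w" for w x
    unfolding Y_def A_def by (rule anc_restrict2) (use dI in auto)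
  have Gin: "G a b \<in> {Y -` S \<inter> space M | S. S \<in> sets N}" for a b
  proof -
    define T where "T = {F \<in> space N. anc (\<lambda>j F. F j) F (Suc n) d i = a \<and> anc (\<lambda>j F. F j) F (Suc n) d j = b}"
    have "T = {F \<in> space N. anc (\<lambda>j F. F j) F (Suc n) d i = (\<lambda>_. a) F} \<inter>
              {F \<in> space N. anc (\<lambda>j F. F j) F (Suc n) d j = (\<lambda>_. b) F}" unfolding T_def by auto
    also have "\<dots> \<in> sets N" unfolding N_def
      by (intro sets.Int eq_set_meas anc_meas measurable_const measurable_component_singleton dI) auto
    finally have T: "T \<in> sets N" .
    have "G a b = Y -` T \<inter> space M"
      unfolding G_def T_def using measurable_space[OF Ym] AY by auto
    then show ?thesis by (simp only:) (rule CollectI, rule exI[of _ T], simp add: T)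
  qed
  have S'in: "S' a b \<in> {(\<lambda>w. sibpart E w X n) -` S \<inter> space M | S. S \<in> sets (count_space UNIV)}"
    if "a \<in> V'" "b \<in> V'" for a b
  proof -
    have "S' a b = (\<lambda>w. sibpart E w X n) -` (UNIV - SS a b) \<inter> space M"
      unfolding S'_def using Sm_eq[OF gd gm bw n, of a b] that unfolding V'_def by auto
    then show ?thesis by (simp only:) (rule CollectI, rule exI[of _ "UNIV - SS a b"], simp)
  qed
  have Gs: "G a b \<in> events" for a b using Gin[of a b] measurable_sets[OF Ym] by auto
  have S's: "S' a b \<in> events" for a b unfolding S'_def using Sm_sets[OF gd gm bw n] by auto
  have pS': "measure M (S' a b) = 1 - coal_incr k X n" if "a \<in> V'" "b \<in> V'-{a}" for a b
  proof -
    have "measure M (S' a b) = 1 - measure M {w \<in> space M. E n w a = E n w b}"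
      unfolding S'_def using Sm_sets[OF gd gm bw n] by (simp add: prob_compl)
    then show ?thesis using Sm_prob[OF gd gm bw n, of a b] that unfolding V'_def by auto
  qed
  have intI: "integrable M (indicator A :: _ \<Rightarrow> real)" if "A \<in> events" for A
    using that by (intro integrable_real_indicator) (auto simp: less_top[symmetric])
  have "measure M (Dset M E n m i j) = (\<integral>w. indicator (Dset M E n m i j) w \<partial>M)"
    using Dset_sets[OF gd gm m] nm by (simp add: Int_absorb2 Dset_def)
  also have "\<dots> = (\<integral>w. (\<Sum>a\<in>V'. \<Sum>b\<in>V'-{a}. indicator (G a b \<inter> S' a b) w) \<partial>M)"
    by (rule Bochner_Integration.integral_cong[OF refl]) (simp add: pw1)
  also have "\<dots> = (\<Sum>a\<in>V'. \<Sum>b\<in>V'-{a}. measure M (G a b \<inter> S' a b))"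
    using Gs S's by (simp add: intI sets.Int Int_absorb2 sets.sets_into_space)
  also have "\<dots> = (\<Sum>a\<in>V'. \<Sum>b\<in>V'-{a}. (1 - coal_incr k X n) * measure M (G a b))"
  proof (intro sum.cong refl)
    fix a b assume a: "a \<in> V'" and b: "b \<in> V' - {a}"
    have "measure M (G a b \<inter> S' a b) = measure M (S' a b \<inter> G a b)" by (simp add: Int_commute)
    also have "\<dots> = measure M (S' a b) * measure M (G a b)"
      by (rule indep_setD[OF indS S'in Gin]) (use a b in auto)
    finally show "measure M (G a b \<inter> S' a b) = (1 - coal_incr k X n) * measure M (G a b)"
      using pS'[OF a b] by simp
  qed
  also have "\<dots> = (1 - coal_incr k X n) * (\<Sum>a\<in>V'. \<Sum>b\<in>V'-{a}. measure M (G a b))"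
    by (simp add: sum_distrib_left)
  also have "(\<Sum>a\<in>V'. \<Sum>b\<in>V'-{a}. measure M (G a b)) = (\<integral>w. (\<Sum>a\<in>V'. \<Sum>b\<in>V'-{a}. indicator (G a b) w) \<partial>M)"
    using Gs by (simp add: intI Int_absorb2 sets.sets_into_space)
  also have "\<dots> = (\<integral>w. indicator (Dset M E (Suc n) m i j) w \<partial>M)"
    by (rule Bochner_Integration.integral_cong[OF refl]) (simp add: pw2)
  also have "\<dots> = measure M (Dset M E (Suc n) m i j)"
    by (simp add: Int_absorb2 Dset_def)
  finally show ?thesis .
qed

end

context
  fixes M :: "'a measure" and \<tau> :: enat and X :: "nat \<Rightarrow> nat"
    and k :: "nat \<Rightarrow> nat \<Rightarrow> nat" and E :: "nat \<Rightarrow> 'a \<Rightarrow> nat \<Rightarrow> nat"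
  assumes gd: "genealogy_data \<tau> X k"
    and gm: "genealogy_model M \<tau> X k E"
begin

lemma bw_main:
  assumes bw: "backward_neutral M \<tau> X E" and m: "enat m < \<tau>"
  shows "d \<le> m \<Longrightarrow> Rs M X E (m - d) m = real (X m) * (real (X m) - 1) * (\<Prod>j\<in>{m - d..<m}. 1 - coal_incr k X j)"
proof (induction d)
  case 0
  then show ?case using Rs_base[OF gd gm m] by simp
next
  case (Suc d)
  define n where "n = m - Suc d"
  have Sn: "Suc n = m - d" and nm: "Suc n \<le> m" "n < m" unfolding n_def using Suc.prems by auto
  have "Rs M X E n m = (\<Sum>i\<in>{1..X m}. \<Sum>j\<in>{1..X m} - {i}. (1 - coal_incr k X n) * measure M (Dset M E (Suc n) m i j))"
    unfolding Rs_def by (intro sum.cong refl) (auto intro!: bw_pair[OF gd gm bw m nm(1)])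
  also have "\<dots> = (1 - coal_incr k X n) * Rs M X E (Suc n) m"
    unfolding Rs_def by (simp add: sum_distrib_left)
  also have "Rs M X E (Suc n) m = real (X m) * (real (X m) - 1) * (\<Prod>j\<in>{Suc n..<m}. 1 - coal_incr k X j)"
    unfolding Sn using Suc by simp
  also have "(1 - coal_incr k X n) * (real (X m) * (real (X m) - 1) * (\<Prod>j\<in>{Suc n..<m}. 1 - coal_incr k X j))
      = real (X m) * (real (X m) - 1) * (\<Prod>j\<in>{n..<m}. 1 - coal_incr k X j)"
    using nm by (simp add: prod.atLeast_Suc_lessThan)
  finally show ?case unfolding n_def .
qed

lemma Rs_formula:
  assumes "forward_neutral M \<tau> X E \<or> backward_neutral M \<tau> X E" "n \<le> m" "enat m < \<tau>"
  shows "Rs M X E n m = real (X m) * (real (X m) - 1) * (\<Prod>j\<in>{n..<m}. 1 - coal_incr k X j)"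
  using assms(1)
proof
  assume "forward_neutral M \<tau> X E"
  then show ?thesis using fwd_main[OF gd gm _ assms(2,3)] by simp
next
  assume bw: "backward_neutral M \<tau> X E"
  have "m - (m - n) = n" using assms(2) by simp
  then show ?thesis using bw_main[OF bw assms(3), of "m - n"] by simp
qed

lemma s01: assumes "enat (Suc j) < \<tau>" shows "0 \<le> coal_incr k X j \<and> coal_incr k X j \<le> 1"
proof -
  let ?S = "real (X (Suc j))"
  have X2': "X (Suc j) \<ge> 2" using X2[OF gd gm assms] .
  have den: "?S * (?S - 1) > 0" using X2' by simp
  have ks: "(\<Sum>i=1..X j. real (k j i)) = ?S" using ksum[OF gd gm assms] by (metis of_nat_sum)
  have nn: "0 \<le> (\<Sum>i=1..X j. real (k j i) * (real (k j i) - 1))"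
  proof (rule sum_nonneg)
    fix i show "0 \<le> real (k j i) * (real (k j i) - 1)" by (cases "k j i") auto
  qed
  have sq: "(\<Sum>i=1..X j. real (k j i) * real (k j i)) \<le> (\<Sum>i=1..X j. real (k j i) * ?S)"
  proof (rule sum_mono)
    fix i assume i: "i \<in> {1..X j}"
    have "real (k j i) \<le> ?S" unfolding ks[symmetric]
      using i by (intro member_le_sum) auto
    then show "real (k j i) * real (k j i) \<le> real (k j i) * ?S" by (intro mult_left_mono) auto
  qed
  have "(\<Sum>i=1..X j. real (k j i) * (real (k j i) - 1))
      = (\<Sum>i=1..X j. real (k j i) * real (k j i)) - (\<Sum>i=1..X j. real (k j i))"
    by (simp add: algebra_simps sum_subtractf)
  also have "\<dots> \<le> ?S * ?S - ?S" using sq ks by (simp add: sum_distrib_right[symmetric])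
  finally have le: "(\<Sum>i=1..X j. real (k j i) * (real (k j i) - 1)) \<le> ?S * (?S - 1)" by (simp add: algebra_simps)
  show ?thesis unfolding coal_incr_def using nn le den by (simp add: divide_le_eq_1)
qed

end

lemma tendsto_one_minus_iff: "((\<lambda>m. 1 - p m) \<longlonglongrightarrow> (1::real)) \<longleftrightarrow> (p \<longlonglongrightarrow> 0)"
proof
  assume "(\<lambda>m. 1 - p m) \<longlonglongrightarrow> 1"
  from tendsto_diff[OF tendsto_const[of 1] this] show "p \<longlonglongrightarrow> 0" by simp
next
  assume "p \<longlonglongrightarrow> 0"
  from tendsto_diff[OF tendsto_const[of 1] this] show "(\<lambda>m. 1 - p m) \<longlonglongrightarrow> 1" by simp
qed

theorem lemma6p1:
  fixes M :: "'a measure" and \<tau> :: enat and X :: "nat \<Rightarrow> nat"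
    and k :: "nat \<Rightarrow> nat \<Rightarrow> nat" and E :: "nat \<Rightarrow> 'a \<Rightarrow> nat \<Rightarrow> nat"
  assumes "genealogy_data \<tau> X k"
    and "genealogy_model M \<tau> X k E"
    and "forward_neutral M \<tau> X E \<or> backward_neutral M \<tau> X E"
  shows "(\<forall>n m. n < m \<and> enat m < \<tau> \<longrightarrow>
            coal_prob M X E n m = 1 - (\<Prod>j\<in>{n..<m}. 1 - coal_incr k X j))
       \<and> (\<forall>n m m'. n < m \<and> m \<le> m' \<and> enat m' < \<tau> \<longrightarrow>
            coal_prob M X E n m \<le> coal_prob M X E n m')
       \<and> (\<tau> = \<infinity> \<and> (\<forall>j. coal_incr k X j < 1) \<longrightarrow>
            ((\<forall>n. (\<lambda>m. coal_prob M X E n m) \<longlonglongrightarrow> 1) \<longleftrightarrow> \<not> summable (coal_incr k X)))"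
proof -
  note gd = assms(1) and gm = assms(2)
  have P1: "coal_prob M X E n m = 1 - (\<Prod>j\<in>{n..<m}. 1 - coal_incr k X j)" if nm: "n < m" and mt: "enat m < \<tau>" for n m
  proof -
    obtain m0 where m0: "m = Suc m0" using nm by (cases m) auto
    have "X m \<ge> 2" using X2[OF gd gm] that(2) m0 by simp
    then have nz: "real (X m) * (real (X m) - 1) \<noteq> 0" by simp
    have c: "coal_prob M X E n m = (real (X m) * (real (X m) - 1) - Rs M X E n m) / (real (X m) * (real (X m) - 1))"
      using coal_Rs[OF gd gm mt, of n] nm by simp
    have r: "Rs M X E n m = real (X m) * (real (X m) - 1) * (\<Prod>j\<in>{n..<m}. 1 - coal_incr k X j)"
      using Rs_formula[OF gd gm assms(3) _ mt, of n] nm by simp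
    show ?thesis unfolding c r using nz by (simp add: field_simps)
  qed
  have S01: "0 \<le> coal_incr k X j \<and> coal_incr k X j \<le> 1" if "enat (Suc j) < \<tau>" for j
    using s01[OF gd gm that] .
  have P2: "coal_prob M X E n m \<le> coal_prob M X E n m'" if "n < m" "m \<le> m'" "enat m' < \<tau>" for n m m'
  proof -
    have m: "enat m < \<tau>" using that(2,3) by (rule enat_le_less)
    have s: "0 \<le> coal_incr k X j \<and> coal_incr k X j \<le> 1" if "j < m'" for j
      using S01 that \<open>enat m' < \<tau>\<close> by (meson Suc_leI enat_le_less)
    have split: "(\<Prod>j\<in>{n..<m}. 1 - coal_incr k X j) * (\<Prod>j\<in>{m..<m'}. 1 - coal_incr k X j)
        = (\<Prod>j\<in>{n..<m'}. 1 - coal_incr k X j)"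
      using that by (intro prod.atLeastLessThan_concat) auto
    have a: "0 \<le> (\<Prod>j\<in>{n..<m}. 1 - coal_incr k X j)" using s that by (intro prod_nonneg) auto
    have b: "(\<Prod>j\<in>{m..<m'}. 1 - coal_incr k X j) \<le> 1" using s by (intro prod_le_1) auto
    have "(\<Prod>j\<in>{n..<m'}. 1 - coal_incr k X j) \<le> (\<Prod>j\<in>{n..<m}. 1 - coal_incr k X j)"
      unfolding split[symmetric] using a b by (simp add: mult_left_le)
    moreover have "n < m'" using that by simp
    ultimately show ?thesis using P1[OF that(1) m] P1[OF \<open>n < m'\<close> that(3)] by simp
  qed
  have P3: "(\<forall>n. (\<lambda>m. coal_prob M X E n m) \<longlonglongrightarrow> 1) \<longleftrightarrow> \<not> summable (coal_incr k X)"
    if inf: "\<tau> = \<infinity>" and lt: "\<forall>j. coal_incr k X j < 1"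
  proof -
    have s: "0 \<le> coal_incr k X j \<and> coal_incr k X j \<le> 1" for j using S01 inf by simp
    have "(\<lambda>m. coal_prob M X E n m) \<longlonglongrightarrow> 1 \<longleftrightarrow> (\<lambda>m. \<Prod>j\<in>{n..<m}. 1 - coal_incr k X j) \<longlonglongrightarrow> 0" for n
    proof -
      have ev: "eventually (\<lambda>m. coal_prob M X E n m = 1 - (\<Prod>j\<in>{n..<m}. 1 - coal_incr k X j)) sequentially"
        unfolding eventually_sequentially using P1 inf by (intro exI[of _ "Suc n"]) auto
      have "(\<lambda>m. coal_prob M X E n m) \<longlonglongrightarrow> 1 \<longleftrightarrow> (\<lambda>m. 1 - (\<Prod>j\<in>{n..<m}. 1 - coal_incr k X j)) \<longlonglongrightarrow> 1"
        by (rule tendsto_cong[OF ev])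
      also have "\<dots> \<longleftrightarrow> (\<lambda>m. \<Prod>j\<in>{n..<m}. 1 - coal_incr k X j) \<longlonglongrightarrow> 0"
        by (rule tendsto_one_minus_iff)
      finally show ?thesis .
    qed
    then show ?thesis using prod_tendsto_zero_iff[of "coal_incr k X"] s by simp
  qed
  have A1: "\<forall>n m. n < m \<and> enat m < \<tau> \<longrightarrow> coal_prob M X E n m = 1 - (\<Prod>j\<in>{n..<m}. 1 - coal_incr k X j)"
  proof (intro allI impI)
    fix n m assume "n < m \<and> enat m < \<tau>"
    then show "coal_prob M X E n m = 1 - (\<Prod>j\<in>{n..<m}. 1 - coal_incr k X j)" by (intro P1) auto
  qed
  have A2: "\<forall>n m m'. n < m \<and> m \<le> m' \<and> enat m' < \<tau> \<longrightarrow> coal_prob M X E n m \<le> coal_prob M X E n m'"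
  proof (intro allI impI)
    fix n m m' assume "n < m \<and> m \<le> m' \<and> enat m' < \<tau>"
    then show "coal_prob M X E n m \<le> coal_prob M X E n m'" by (intro P2) auto
  qed
  have A3: "\<tau> = \<infinity> \<and> (\<forall>j. coal_incr k X j < 1) \<longrightarrow>
            ((\<forall>n. (\<lambda>m. coal_prob M X E n m) \<longlonglongrightarrow> 1) \<longleftrightarrow> \<not> summable (coal_incr k X))"
  proof (intro impI)
    assume "\<tau> = \<infinity> \<and> (\<forall>j. coal_incr k X j < 1)"
    then show "(\<forall>n. (\<lambda>m. coal_prob M X E n m) \<longlonglongrightarrow> 1) \<longleftrightarrow> \<not> summable (coal_incr k X)"
      by (intro P3) auto
  qed
  show ?thesis using A1 A2 A3 by (intro conjI)
qed

end
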